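(* The $C^*$-algebras $\mathcal{Q}_S$ and $\mathcal{O}[\mathbb{Z},H^+,\theta]$ are canonically isomorphic, via $u\mapsto u_1$ and $s_p\mapsto s_p$ for $p\in S$.
   Context: $S\subset\{2,3,\dots\}$ is a non-empty (possibly infinite) set of pairwise relatively prime integers and $H^+$ the submonoid of $(\mathbb{N}^\times,\cdot)$ generated by $S$; $\theta$ is the action of $H^+$ on $\mathbb{Z}$ by multiplication. $\mathcal{Q}_S$ is the universal $C^*$-algebra generated by a unitary $u$ and isometries $(s_p)_{p\in S}$ subject to $s_p^*s_q=s_qs_p^*$ ($p\neq q$), $s_pu=u^ps_p$, $\sum_{m=0}^{p-1}u^ms_ps_p^*u^{-m}=1$. $\mathcal{O}[\mathbb{Z},H^+,\theta]$ is the universal $C^*$-algebra generated by a unitary representation $(u_g)_{g\in\mathbb{Z}}$ of $\mathbb{Z}$ and a representation $(s_h)_{h\in H^+}$ of $H^+$ by isometries ($s_hs_k=s_{hk}$, $s_1=1$) subject to: (CNP1) $s_hu_g=u_{hg}s_h$; (CNP2) $s_h^*u_gs_k=u_{g_1}s_{k/\gcd(h,k)}s_{h/\gcd(h,k)}^*u_{g_2}$ if $g=hg_1+kg_2$ for some $g_1,g_2\in\mathbb{Z}$, and $s_h^*u_gs_k=0$ otherwise; (CNP3) $\sum_{[g]\in\mathbb{Z}/h\mathbb{Z}}u_gs_hs_h^*u_g^*=1$, for all $h,k\in H^+$, $g\in\mathbb{Z}$. *)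

theory Defs
  imports Complex_Main
begin

class cstar_algebra = real_normed_algebra_1 + complete_space +
  fixes adj :: "'a \<Rightarrow> 'a"
    and scaleC :: "complex \<Rightarrow> 'a \<Rightarrow> 'a"
  assumes scaleC_add_right: "scaleC c (x + y) = scaleC c x + scaleC c y"
    and scaleC_add_left: "scaleC (c + d) x = scaleC c x + scaleC d x"
    and scaleC_scaleC: "scaleC c (scaleC d x) = scaleC (c * d) x"
    and scaleC_one: "scaleC 1 x = x"
    and scaleR_scaleC: "scaleR r x = scaleC (complex_of_real r) x"
    and scaleC_mult_left: "scaleC c x * y = scaleC c (x * y)"
    and scaleC_mult_right: "x * scaleC c y = scaleC c (x * y)"
    and norm_scaleC: "norm (scaleC c x) = cmod c * norm x"
    and adj_adj: "adj (adj x) = x"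
    and adj_add: "adj (x + y) = adj x + adj y"
    and adj_mult: "adj (x * y) = adj y * adj x"
    and adj_scaleC: "adj (scaleC c x) = scaleC (cnj c) (adj x)"
    and cstar_identity: "norm (adj x * x) = norm x * norm x"

definition isometry :: "'a::cstar_algebra \<Rightarrow> bool" where
  "isometry v \<longleftrightarrow> adj v * v = 1"

definition unitary :: "'a::cstar_algebra \<Rightarrow> bool" where
  "unitary u \<longleftrightarrow> adj u * u = 1 \<and> u * adj u = 1"

definition upow :: "'a::cstar_algebra \<Rightarrow> int \<Rightarrow> 'a" where
  "upow u m = (if 0 \<le> m then u ^ nat m else adj u ^ nat (- m))"

inductive_set Hplus :: "nat set \<Rightarrow> nat set" for S :: "nat set" where
  one: "1 \<in> Hplus S"
| mult: "p \<in> S \<Longrightarrow> h \<in> Hplus S \<Longrightarrow> p * h \<in> Hplus S"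

definition QS_rel :: "nat set \<Rightarrow> 'a::cstar_algebra \<Rightarrow> (nat \<Rightarrow> 'a) \<Rightarrow> bool" where
  "QS_rel S u s \<longleftrightarrow>
     unitary u \<and>
     (\<forall>p\<in>S. isometry (s p)) \<and>
     (\<forall>p\<in>S. \<forall>q\<in>S. p \<noteq> q \<longrightarrow> adj (s p) * s q = s q * adj (s p)) \<and>
     (\<forall>p\<in>S. s p * u = u ^ p * s p) \<and>
     (\<forall>p\<in>S. (\<Sum>m<p. upow u (int m) * s p * adj (s p) * upow u (- int m)) = 1)"

text \<open>In (CNP3) the sum
  over Z/hZ is taken over the representatives 0,...,h-1.\<close>
definition CNP_rel :: "nat set \<Rightarrow> (int \<Rightarrow> 'a::cstar_algebra) \<Rightarrow> (nat \<Rightarrow> 'a) \<Rightarrow> bool" where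
  "CNP_rel S U V \<longleftrightarrow>
     U 0 = 1 \<and> (\<forall>g k. U (g + k) = U g * U k) \<and> (\<forall>g. unitary (U g)) \<and>
     V 1 = 1 \<and> (\<forall>h\<in>Hplus S. isometry (V h)) \<and>
     (\<forall>h\<in>Hplus S. \<forall>k\<in>Hplus S. V (h * k) = V h * V k) \<and>
     (\<forall>h\<in>Hplus S. \<forall>g. V h * U g = U (int h * g) * V h) \<and>
     (\<forall>h\<in>Hplus S. \<forall>k\<in>Hplus S. \<forall>g.
        (\<forall>g1 g2. g = int h * g1 + int k * g2 \<longrightarrow>
           adj (V h) * U g * V k
             = U g1 * V (k div gcd h k) * adj (V (h div gcd h k)) * U g2) \<and>
        ((\<nexists>g1 g2. g = int h * g1 + int k * g2) \<longrightarrow> adj (V h) * U g * V k = 0)) \<and>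
     (\<forall>h\<in>Hplus S. (\<Sum>g\<in>{0..<int h}. U g * V h * adj (V h) * adj (U g)) = 1)"

end

theory Submission
  imports Defs
begin



lemma scaleC_zero_left[simp]: "scaleC 0 (x::'a::cstar_algebra) = 0"
  using scaleC_add_left[of 0 0 x] by simp

lemma scaleC_zero_right[simp]: "scaleC c 0 = 0"
  using scaleC_add_right[of c 0 0] by simp

lemma scaleC_minus_right: "scaleC c (- x) = - scaleC c x"
  using scaleC_add_right[of c x "-x"] by (simp add: eq_neg_iff_add_eq_0 add.commute)

lemma scaleC_diff_right: "scaleC c (x - y) = scaleC c x - scaleC c y"
  using scaleC_add_right[of c x "-y"] scaleC_minus_right[of c y] by simp

lemma scaleC_minus_left: "scaleC (- c) x = - scaleC c x"
  using scaleC_add_left[of c "-c" x] by (simp add: eq_neg_iff_add_eq_0 add.commute)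

lemma scaleC_sum_right: "scaleC c (sum f A) = (\<Sum>i\<in>A. scaleC c (f i))"
  by (induction A rule: infinite_finite_induct) (auto simp: scaleC_add_right)

lemma scaleC_sum_left: "scaleC (sum f A) x = (\<Sum>i\<in>A. scaleC (f i) x)"
  by (induction A rule: infinite_finite_induct) (auto simp: scaleC_add_left)

lemma scaleC_of_real: "scaleC (of_real r) x = scaleR r x"
  by (simp add: scaleR_scaleC)

lemma of_nat_mult_eq_scaleC: "of_nat n * x = scaleC (of_nat n) x"
proof -
  have "of_nat n * x = scaleR (real n) x"
    by (simp add: scaleR_conv_of_real)
  also have "\<dots> = scaleC (of_real (real n)) x" by (simp add: scaleR_scaleC)
  finally show ?thesis by simp
qed

lemma scaleC_power: "(scaleC c x) ^ n = scaleC (c ^ n) (x ^ n)"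
  by (induction n) (auto simp: scaleC_one scaleC_mult_left scaleC_mult_right scaleC_scaleC mult.commute)

lemma adj_zero[simp]: "adj 0 = 0"
  using adj_add[of 0 0] by simp

lemma adj_one[simp]: "adj 1 = 1"
proof -
  have "adj 1 = adj 1 * adj (adj (1::'a::cstar_algebra))" by (simp add: adj_adj)
  also have "\<dots> = adj (adj 1 * 1)" by (simp only: adj_mult)
  finally show ?thesis by (simp add: adj_adj)
qed

lemma adj_minus: "adj (- x) = - adj x"
  using adj_add[of x "-x"] by (simp add: eq_neg_iff_add_eq_0 add.commute)

lemma adj_diff: "adj (x - y) = adj x - adj y"
  using adj_add[of x "-y"] adj_minus[of y] by simp

lemma adj_sum: "adj (sum f A) = (\<Sum>i\<in>A. adj (f i))"
  by (induction A rule: infinite_finite_induct) (auto simp: adj_add)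

lemma adj_power: "adj (x ^ n) = adj x ^ n"
  by (induction n) (auto simp: adj_mult power_commutes)

lemma adj_scaleR: "adj (scaleR r x) = scaleR r (adj x)"
  by (simp add: scaleR_scaleC adj_scaleC)

lemma norm_adj_le: "norm x \<le> norm (adj x)"
proof (cases "norm x = 0")
  case False
  have "norm x * norm x = norm (adj x * x)" by (simp add: cstar_identity)
  also have "\<dots> \<le> norm (adj x) * norm x" by (rule norm_mult_ineq)
  finally show ?thesis using False by (simp add: mult_le_cancel_right)
qed simp

lemma norm_adj[simp]: "norm (adj x) = norm x"
  using norm_adj_le[of x] norm_adj_le[of "adj x"] by (simp add: adj_adj)

lemma norm_proj_le:
  assumes "adj P = P" "P * P = P" shows "norm P \<le> 1"
proof -
  have "norm P * norm P = norm P" using cstar_identity[of P] assms by simp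
  then have "norm P = 0 \<or> norm P = 1"
    by (metis mult_cancel_right1 mult_zero_left)
  then show ?thesis by auto
qed

lemma norm_zero_iff_sq: "adj x * x = 0 \<Longrightarrow> x = 0"
  using cstar_identity[of x] by simp



lemma one_plus_power:
  fixes x :: "'a::ring_1"
  shows "(1 + x) ^ n = (\<Sum>k\<le>n. of_nat (n choose k) * x ^ k)"
proof (induction n)
  case 0
  then show ?case by simp
next
  case (Suc n)
  define f where "f k = of_nat (n choose k) * x ^ k" for k
  define S where "S = (\<Sum>k\<le>n. f k)"
  have sh: "(\<Sum>k\<le>n. f (Suc k)) = S - 1"
  proof -
    have "(\<Sum>k\<le>Suc n. f k) = f 0 + (\<Sum>k\<le>n. f (Suc k))"
      by (rule sum.atMost_Suc_shift)
    moreover have "(\<Sum>k\<le>Suc n. f k) = S"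
      by (simp add: S_def f_def binomial_eq_0)
    ultimately show ?thesis by (simp add: f_def algebra_simps)
  qed
  have xs: "x * S = (\<Sum>k\<le>n. of_nat (n choose k) * x ^ Suc k)"
    by (simp add: S_def f_def sum_distrib_left mult_of_nat_commute mult.assoc)
  have "(\<Sum>k\<le>Suc n. of_nat (Suc n choose k) * x ^ k)
        = 1 + (\<Sum>k\<le>n. of_nat (Suc n choose Suc k) * x ^ Suc k)"
    by (subst sum.atMost_Suc_shift) simp
  also have "\<dots> = 1 + (\<Sum>k\<le>n. of_nat (n choose k) * x ^ Suc k) + (\<Sum>k\<le>n. f (Suc k))"
    by (simp add: f_def sum.distrib distrib_right add.assoc)
  also have "\<dots> = S + x * S" using sh xs by simp
  also have "\<dots> = (1 + x) * (1 + x) ^ n" using Suc.IH by (simp add: S_def f_def algebra_simps)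
  finally show ?case by simp
qed

lemma roots_unity_sum:
  assumes m: "m > 0"
  defines "\<omega> \<equiv> cis (2 * pi / real m)"
  shows "(\<Sum>k<m. (\<omega> ^ l) ^ k) = (if m dvd l then of_nat m else 0)"
proof -
  have wl: "\<omega> ^ l = cis (2 * pi * real l / real m)"
    by (simp add: \<omega>_def DeMoivre mult_ac)
  have wm: "(\<omega> ^ l) ^ m = 1"
  proof -
    have "(\<omega> ^ l) ^ m = cis (2 * pi * real l)"
      using m by (simp add: wl DeMoivre)
    also have "\<dots> = 1" by (metis cis_multiple_2pi Ints_of_nat of_real_of_nat_eq)
    finally show ?thesis .
  qed
  show ?thesis
  proof (cases "m dvd l")
    case True
    then obtain q where "l = m * q" by blast
    then have "2 * pi * real l / real m = 2 * pi * real q" using m by (simp add: field_simps)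
    then have "\<omega> ^ l = cis (2 * pi * real q)" by (simp add: wl)
    also have "\<dots> = 1" by (metis cis_multiple_2pi Ints_of_nat of_real_of_nat_eq)
    finally show ?thesis using True by simp
  next
    case False
    have ne: "\<omega> ^ l \<noteq> 1"
    proof
      assume "\<omega> ^ l = 1"
      then have "cos (2 * pi * real l / real m) = 1" by (simp add: wl complex_eq_iff)
      then obtain k :: int where k: "2 * pi * real l / real m = real_of_int k * 2 * pi"
        by (subst (asm) cos_one_2pi_int) blast
      then have "real l = real_of_int k * real m" using m by (simp add: field_simps)
      then have "int l = k * int m" by (metis of_int_eq_iff of_int_mult of_int_of_nat_eq)
      then have "int m dvd int l" by simp
      then show False using False by simp
    qed
    have "(\<Sum>k<m. (\<omega> ^ l) ^ k) = ((\<omega> ^ l) ^ m - 1) / (\<omega> ^ l - 1)"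
      using ne by (subst geometric_sum) auto
    then show ?thesis using False wm by simp
  qed
qed



lemma e_power:
  fixes e z :: "'a::cstar_algebra"
  assumes ee: "e * e = e" and ez: "e * z = z" and ze: "z * e = z"
  shows "(e + scaleC c z) ^ Suc n = e * (1 + scaleC c z) ^ Suc n"
proof (induction n)
  case 0
  show ?case using ez by (simp add: distrib_left scaleC_mult_right)
next
  case (Suc n)
  have c1: "(e + scaleC c z) * e = e + scaleC c z"
    using ee ze by (simp add: distrib_right scaleC_mult_left)
  have c2: "e + scaleC c z = e * (1 + scaleC c z)"
    using ez by (simp add: distrib_left scaleC_mult_right)
  have "(e + scaleC c z) ^ Suc (Suc n) = (e + scaleC c z) * (e * (1 + scaleC c z) ^ Suc n)"
    using Suc.IH by (simp only: power_Suc[of _ "Suc n"])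
  also have "\<dots> = ((e + scaleC c z) * e) * (1 + scaleC c z) ^ Suc n" by (simp add: mult.assoc)
  also have "\<dots> = e * (1 + scaleC c z) * (1 + scaleC c z) ^ Suc n" using c1 c2 by simp
  finally show ?case by (simp add: mult.assoc)
qed

lemma one_plus_scaleC_power:
  fixes z :: "'a::cstar_algebra"
  shows "(1 + scaleC c z) ^ n = (\<Sum>j\<le>n. scaleC (of_nat (n choose j) * c ^ j) (z ^ j))"
  by (simp add: one_plus_power scaleC_power of_nat_mult_eq_scaleC scaleC_scaleC)

lemma cauchy_zero:
  fixes e z :: "'a::cstar_algebra"
  assumes ee: "e * e = e" and ez: "e * z = z" and ze: "z * e = z" and rho: "\<rho> > 0"
    and bnd: "\<And>c. cmod c \<le> \<rho> \<Longrightarrow> norm (e + scaleC c z) \<le> 1"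
  shows "z = 0"
proof -
  have key: "real (Suc n) * \<rho> * norm z \<le> 1" for n
  proof -
    define N where "N = Suc n"
    define m where "m = Suc N"
    define \<omega> where "\<omega> = cis (2 * pi / real m)"
    define w where "w = \<omega> ^ (m - 1)"
    have m0: "m > 0" by (simp add: m_def)
    have nw: "cmod \<omega> = 1" by (simp add: \<omega>_def)
    define X where "X k = (e + scaleC (of_real \<rho> * \<omega> ^ k) z) ^ N" for k
    have Xb: "norm (X k) \<le> 1" for k
    proof -
      have "norm (X k) \<le> norm (e + scaleC (of_real \<rho> * \<omega> ^ k) z) ^ N"
        unfolding X_def by (rule norm_power_ineq)
      also have "\<dots> \<le> 1"
        using bnd[of "of_real \<rho> * \<omega> ^ k"] rho
        by (intro power_le_one) (auto simp: norm_mult norm_power nw)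
      finally show ?thesis .
    qed
    define Y where "Y = (\<Sum>k<m. scaleC (w ^ k) (X k))"
    have Yb: "norm Y \<le> real m"
    proof -
      have "norm Y \<le> (\<Sum>k<m. norm (scaleC (w ^ k) (X k)))"
        unfolding Y_def by (rule norm_sum)
      also have "\<dots> \<le> (\<Sum>k<m. 1)"
        by (intro sum_mono) (simp add: norm_scaleC w_def norm_power nw Xb)
      finally show ?thesis by simp
    qed
    have Xe: "X k = e * (\<Sum>j\<le>N. scaleC (of_nat (N choose j) * (of_real \<rho> * \<omega> ^ k) ^ j) (z ^ j))" for k
      unfolding X_def N_def by (simp only: e_power[OF ee ez ze] one_plus_scaleC_power)
    have coef: "(\<Sum>k<m. w ^ k * (of_nat (N choose j) * (of_real \<rho> * \<omega> ^ k) ^ j))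
        = of_nat (N choose j) * of_real \<rho> ^ j * (\<Sum>k<m. (\<omega> ^ (m - 1 + j)) ^ k)" for j
    proof -
      have "w ^ k * (of_nat (N choose j) * (of_real \<rho> * \<omega> ^ k) ^ j)
          = of_nat (N choose j) * of_real \<rho> ^ j * (\<omega> ^ (m - 1 + j)) ^ k" for k
        by (simp add: w_def power_mult_distrib power_add power_mult[symmetric] mult_ac)
      note pt = this
      show ?thesis by (subst sum_distrib_left) (rule sum.cong[OF refl], rule pt)
    qed
    have dv: "j \<le> N \<Longrightarrow> (m dvd (m - 1 + j)) = (j = 1)" for j
    proof
      assume j: "j \<le> N" and d: "m dvd (m - 1 + j)"
      then obtain q where q: "m - 1 + j = m * q" by blast
      have "q > 0" using q m_def N_def j by (cases q) auto
      moreover have "q < 2"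
      proof (rule ccontr)
        assume "\<not> q < 2"
        then have "m * 2 \<le> m * q" by (intro mult_le_mono2) simp
        then show False using q m_def N_def j by simp
      qed
      ultimately have "q = 1" by simp
      then show "j = 1" using q m_def by simp
    qed (simp add: m_def)
    have "Y = e * (\<Sum>k<m. scaleC (w ^ k) (\<Sum>j\<le>N. scaleC (of_nat (N choose j) * (of_real \<rho> * \<omega> ^ k) ^ j) (z ^ j)))"
      unfolding Y_def Xe by (simp add: scaleC_mult_right sum_distrib_left)
    also have "(\<Sum>k<m. scaleC (w ^ k) (\<Sum>j\<le>N. scaleC (of_nat (N choose j) * (of_real \<rho> * \<omega> ^ k) ^ j) (z ^ j)))
       = (\<Sum>j\<le>N. scaleC (\<Sum>k<m. w ^ k * (of_nat (N choose j) * (of_real \<rho> * \<omega> ^ k) ^ j)) (z ^ j))"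
      by (simp add: scaleC_sum_right scaleC_sum_left scaleC_scaleC sum.swap[of _ "{..<m}"])
    also have "\<dots> = (\<Sum>j\<le>N. (if j = 1 then scaleC (of_nat N * of_real \<rho> * of_nat m) z else 0))"
    proof (rule sum.cong[OF refl])
      fix j assume "j \<in> {..N}"
      then have j: "j \<le> N" by simp
      show "scaleC (\<Sum>k<m. w ^ k * (of_nat (N choose j) * (of_real \<rho> * \<omega> ^ k) ^ j)) (z ^ j)
          = (if j = 1 then scaleC (of_nat N * of_real \<rho> * of_nat m) z else 0)"
        unfolding coef roots_unity_sum[OF m0, folded \<omega>_def] using dv[OF j] by auto
    qed
    also have "\<dots> = scaleC (of_nat N * of_real \<rho> * of_nat m) z"
      by (simp add: N_def)
    finally have "Y = e * scaleC (of_nat N * of_real \<rho> * of_nat m) z" .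
    then have "Y = scaleC (of_nat N * of_real \<rho> * of_nat m) z"
      using ez by (simp add: scaleC_mult_right)
    then have "norm Y = real N * \<rho> * real m * norm z"
      using rho by (simp add: norm_scaleC norm_mult)
    with Yb have "real m * (real N * \<rho> * norm z) \<le> real m * 1" by (simp add: mult_ac)
    then show ?thesis using m0 unfolding N_def by (simp add: mult_le_cancel_left)
  qed
  show ?thesis
  proof (rule ccontr)
    assume "z \<noteq> 0"
    then have pz: "\<rho> * norm z > 0" using rho by simp
    obtain n :: nat where "1 / (\<rho> * norm z) < real n" using reals_Archimedean2 by blast
    then have "1 < real n * (\<rho> * norm z)" using pz by (simp add: field_simps)
    also have "\<dots> \<le> real (Suc n) * (\<rho> * norm z)" using pz by (intro mult_right_mono) auto
    finally show False using key[of n] by (simp add: mult_ac)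
  qed
qed



lemma conv_le1:
  fixes x y :: "'a::real_normed_vector"
  assumes "0 \<le> a" "0 \<le> b" "a + b = 1" "norm x \<le> 1" "norm y \<le> 1"
  shows "norm (scaleR a x + scaleR b y) \<le> 1"
proof -
  have "norm (scaleR a x + scaleR b y) \<le> norm (scaleR a x) + norm (scaleR b y)"
    by (rule norm_triangle_ineq)
  also have "\<dots> = a * norm x + b * norm y" using assms by simp
  also have "\<dots> \<le> a * 1 + b * 1"
    using assms by (intro add_mono mult_left_mono) auto
  finally show ?thesis using assms by simp
qed

lemma norm_sandwich_le:
  fixes p x :: "'a::cstar_algebra"
  assumes "norm p \<le> 1"
  shows "norm (p * x * p) \<le> norm x"
proof -
  have "norm (p * x * p) \<le> norm p * norm x * norm p"
    by (metis norm_mult_ineq mult_right_mono norm_ge_zero order_trans)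
  also have "\<dots> \<le> 1 * norm x * 1"
    using assms by (intro mult_mono) auto
  finally show ?thesis by simp
qed

lemma proj_orth:
  fixes P :: "nat \<Rightarrow> 'a::cstar_algebra"
  assumes proj: "\<And>k. k < n \<Longrightarrow> adj (P k) = P k \<and> P k * P k = P k"
    and sum1: "(\<Sum>k<n. P k) = 1" and ij: "i < n" "j < n" "i \<noteq> j"
  shows "P j * P i = 0"
proof -
  define e where "e = P i"
  define z where "z = P i * P j * P i"
  have Pi: "adj (P i) = P i" "P i * P i = P i" using proj ij by auto
  have Pj: "adj (P j) = P j" "P j * P j = P j" using proj ij by auto
  have ee: "e * e = e" using Pi by (simp add: e_def)
  have ez: "e * z = z" using Pi by (simp add: e_def z_def mult.assoc[symmetric])
  have ze: "z * e = z" using Pi by (simp add: e_def z_def mult.assoc)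
  have ne: "norm e \<le> 1" using Pi norm_proj_le unfolding e_def by blast
  have n2: "n \<ge> 2" using ij by linarith
  define \<delta> where "\<delta> = 1 / real n"
  have d0: "\<delta> > 0" and d1: "\<delta> \<le> 1" using n2 by (auto simp: \<delta>_def)
  have bq: "norm (e - scaleR t (P i * P k * P i)) \<le> 1" if t: "0 \<le> t" "t \<le> 1" and k: "k < n" for t k
  proof -
    have Pk: "adj (P k) = P k" "P k * P k = P k" using proj k by auto
    have "adj (1 - P k) = 1 - P k" "(1 - P k) * (1 - P k) = 1 - P k"
      using Pk by (auto simp: adj_diff algebra_simps)
    then have n1: "norm (1 - P k) \<le> 1" by (rule norm_proj_le)
    have "norm (scaleR (1 - t) 1 + scaleR t (1 - P k)) \<le> 1"
      using t n1 by (intro conv_le1) auto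
    moreover have "scaleR (1 - t) 1 + scaleR t (1 - P k) = 1 - scaleR t (P k)"
      by (simp add: algebra_simps)
    ultimately have "norm (1 - scaleR t (P k)) \<le> 1" by simp
    moreover have "e - scaleR t (P i * P k * P i) = P i * (1 - scaleR t (P k)) * P i"
      using Pi by (simp add: e_def algebra_simps)
    ultimately show ?thesis using norm_sandwich_le[of "P i" "1 - scaleR t (P k)"] ne
      unfolding e_def by simp
  qed
  define K where "K = {k. k < n \<and> k \<noteq> i \<and> k \<noteq> j}"
  have fK: "finite K" by (simp add: K_def)
  have cK: "card K \<le> n"
  proof -
    have "K \<subseteq> {..<n}" by (auto simp: K_def)
    then show ?thesis using card_mono[of "{..<n}" K] by simp
  qed
  have split: "{..<n} = insert i (insert j K)" using ij by (auto simp: K_def)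
  have "P i * (\<Sum>k<n. P k) * P i = P i" using sum1 Pi by simp
  then have "(\<Sum>k<n. P i * P k * P i) = P i"
    by (simp add: sum_distrib_left sum_distrib_right)
  then have "P i * P i * P i + (P i * P j * P i + (\<Sum>k\<in>K. P i * P k * P i)) = P i"
    unfolding split using ij fK by (simp add: K_def)
  then have zK: "z = - (\<Sum>k\<in>K. P i * P k * P i)"
    using Pi by (simp add: z_def eq_neg_iff_add_eq_0 add.commute)
  have cplus: "norm (e + scaleR \<delta> z) \<le> 1"
  proof -
    have eq: "e + scaleR \<delta> z = scaleR (1 - \<delta> * real (card K)) e
        + (\<Sum>k\<in>K. scaleR \<delta> (e - P i * P k * P i))"
      by (simp add: zK scaleR_diff_right sum_subtractf scaleR_sum_right algebra_simps)
         (simp add: scaleR_conv_of_real mult.assoc)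
    have "norm (e + scaleR \<delta> z) \<le> norm (scaleR (1 - \<delta> * real (card K)) e)
        + norm (\<Sum>k\<in>K. scaleR \<delta> (e - P i * P k * P i))"
      unfolding eq by (rule norm_triangle_ineq)
    also have "\<dots> \<le> (1 - \<delta> * real (card K)) * 1 + (\<Sum>k\<in>K. \<delta> * 1)"
    proof (rule add_mono)
      have "\<delta> * real (card K) \<le> 1" using cK n2 by (simp add: \<delta>_def field_simps)
      then show "norm (scaleR (1 - \<delta> * real (card K)) e) \<le> (1 - \<delta> * real (card K)) * 1"
        using ne mult_left_mono[of "norm e" 1 "1 - \<delta> * real (card K)"] by simp
      have "norm (\<Sum>k\<in>K. scaleR \<delta> (e - P i * P k * P i)) \<le> (\<Sum>k\<in>K. norm (scaleR \<delta> (e - P i * P k * P i)))"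
        by (rule norm_sum)
      also have "\<dots> \<le> (\<Sum>k\<in>K. \<delta> * 1)"
      proof (rule sum_mono)
        fix k assume "k \<in> K"
        then have "norm (e - scaleR 1 (P i * P k * P i)) \<le> 1" by (intro bq) (auto simp: K_def)
        then show "norm (scaleR \<delta> (e - P i * P k * P i)) \<le> \<delta> * 1"
          using d0 by (simp add: mult_left_mono)
      qed
      finally show "norm (\<Sum>k\<in>K. scaleR \<delta> (e - P i * P k * P i)) \<le> (\<Sum>k\<in>K. \<delta> * 1)" .
    qed
    also have "\<dots> = 1" by simp
    finally show ?thesis .
  qed
  have cminus: "norm (e - scaleR \<delta> z) \<le> 1"
    using bq[OF _ d1 ij(2)] d0 by (simp add: z_def)
  have creal: "norm (e + scaleR a z) \<le> 1" if a: "\<bar>a\<bar> \<le> \<delta>" for a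
  proof -
    have "norm (scaleR ((\<delta> + a) / (2 * \<delta>)) (e + scaleR \<delta> z) + scaleR ((\<delta> - a) / (2 * \<delta>)) (e - scaleR \<delta> z)) \<le> 1"
      using a d0 cplus cminus by (intro conv_le1) (auto simp: field_simps)
    moreover have "scaleR ((\<delta> + a) / (2 * \<delta>)) (e + scaleR \<delta> z) + scaleR ((\<delta> - a) / (2 * \<delta>)) (e - scaleR \<delta> z)
        = e + scaleR a z"
    proof -
      have "scaleR ((\<delta> + a) / (2 * \<delta>)) (e + scaleR \<delta> z) + scaleR ((\<delta> - a) / (2 * \<delta>)) (e - scaleR \<delta> z)
         = scaleR ((\<delta> + a) / (2 * \<delta>) + (\<delta> - a) / (2 * \<delta>)) e + scaleR ((\<delta> + a) / (2 * \<delta>) * \<delta> - (\<delta> - a) / (2 * \<delta>) * \<delta>) z"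
        by (simp add: algebra_simps)
      also have "(\<delta> + a) / (2 * \<delta>) + (\<delta> - a) / (2 * \<delta>) = 1" using d0 by (simp add: field_simps)
      also have "(\<delta> + a) / (2 * \<delta>) * \<delta> - (\<delta> - a) / (2 * \<delta>) * \<delta> = a" using d0 by (simp add: field_simps)
      finally show ?thesis by simp
    qed
    ultimately show ?thesis by simp
  qed
  have csq: "norm (e + scaleR (\<delta>^2) (z * z)) \<le> 1"
  proof -
    define A where "A = e + scaleR \<delta> z"
    define B where "B = e - scaleR \<delta> z"
    have "A * A + B * B = scaleR 2 (e + scaleR (\<delta>^2) (z * z))"
      using ee ez ze by (simp add: A_def B_def algebra_simps power2_eq_square scaleR_2)
        (simp add: scaleR_add_left[symmetric])
    moreover have "norm (A * A) \<le> 1"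
      using cplus norm_mult_ineq[of A A] unfolding A_def
      by (metis mult_le_one norm_ge_zero order_trans)
    moreover have "norm (B * B) \<le> 1"
      using cminus norm_mult_ineq[of B B] unfolding B_def
      by (metis mult_le_one norm_ge_zero order_trans)
    ultimately have "norm (scaleR 2 (e + scaleR (\<delta>^2) (z * z))) \<le> 2"
      by (metis norm_triangle_le add_mono one_add_one)
    then show ?thesis by simp
  qed
  have cim: "norm (e + scaleC (\<i> * of_real b) z) \<le> 1" if b: "\<bar>b\<bar> \<le> \<delta>" for b
  proof -
    define W where "W = e + scaleC (\<i> * of_real b) z"
    have adjz: "adj z = z" using Pi Pj by (simp add: z_def adj_mult mult.assoc)
    have adje: "adj e = e" using Pi by (simp add: e_def)
    have aW: "adj W = e - scaleC (\<i> * of_real b) z"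
      by (simp add: W_def adj_add adj_scaleC adjz adje scaleC_minus_left)
    have "adj W * W = e + scaleC (of_real (b^2)) (z * z)"
    proof -
      define cc where "cc = \<i> * complex_of_real b"
      have "adj W * W = (e - scaleC cc z) * (e + scaleC cc z)"
        by (subst aW) (simp add: W_def cc_def)
      also have "\<dots> = e * e + e * scaleC cc z - scaleC cc z * e - scaleC cc z * scaleC cc z"
        by (simp add: ring_distribs)
      also have "\<dots> = e * e + scaleC cc (e * z) - scaleC cc (z * e) - scaleC (cc * cc) (z * z)"
        by (simp add: scaleC_mult_left scaleC_mult_right scaleC_scaleC)
      also have "\<dots> = e + scaleC (of_real (b^2)) (z * z)"
        unfolding cc_def
        using ee ez ze by (simp add: power2_eq_square scaleC_minus_left[symmetric] mult_ac)
      finally show ?thesis .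
    qed
    also have "\<dots> = e + scaleR (b^2) (z * z)" by (simp only: scaleC_of_real)
    also have "\<dots> = scaleR (1 - b^2 / \<delta>^2) e + scaleR (b^2 / \<delta>^2) (e + scaleR (\<delta>^2) (z * z))"
      using d0 by (simp add: algebra_simps)
    finally have "norm (adj W * W) \<le> 1"
    proof -
      assume eq: "adj W * W = scaleR (1 - b^2 / \<delta>^2) e + scaleR (b^2 / \<delta>^2) (e + scaleR (\<delta>^2) (z * z))"
      have "b^2 \<le> \<delta>^2" using b d0 by (metis abs_ge_zero abs_of_pos power_mono power2_abs)
      then have "b^2 / \<delta>^2 \<le> 1" using d0 by simp
      then show ?thesis unfolding eq using ne csq by (intro conv_le1) auto
    qed
    then have "norm W * norm W \<le> 1" by (simp add: cstar_identity)
    then have "norm W \<le> 1"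
    proof -
      assume h: "norm W * norm W \<le> 1"
      show ?thesis
      proof (rule ccontr)
        assume "\<not> norm W \<le> 1"
        then have "1 * 1 < norm W * norm W" by (intro mult_strict_mono) auto
        then show False using h by simp
      qed
    qed
    then show ?thesis by (simp add: W_def)
  qed
  have cc: "norm (e + scaleC c z) \<le> 1" if c: "cmod c \<le> \<delta> / 2" for c
  proof -
    have dc: "scaleC c z = scaleR (Re c) z + scaleC (\<i> * of_real (Im c)) z"
    proof -
      have "c = of_real (Re c) + \<i> * of_real (Im c)" by (simp add: complex_eq_iff)
      then have "scaleC c z = scaleC (of_real (Re c)) z + scaleC (\<i> * of_real (Im c)) z"
        by (metis scaleC_add_left)
      then show ?thesis by (simp add: scaleC_of_real)
    qed
    have r: "\<bar>2 * Re c\<bar> \<le> \<delta>" using abs_Re_le_cmod[of c] c by simp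
    have im: "\<bar>2 * Im c\<bar> \<le> \<delta>" using abs_Im_le_cmod[of c] c by simp
    have "e + scaleC c z = scaleR (1/2) (e + scaleR (2 * Re c) z) + scaleR (1/2) (e + scaleC (\<i> * of_real (2 * Im c)) z)"
    proof -
      have "scaleC (\<i> * of_real (2 * Im c)) z = scaleR 2 (scaleC (\<i> * of_real (Im c)) z)"
        by (simp add: scaleR_scaleC scaleC_scaleC mult_ac)
      moreover have "e = (1 / 2) *\<^sub>R e + (1 / 2) *\<^sub>R e" by (simp add: scaleR_add_left[symmetric])
      ultimately show ?thesis by (simp add: dc algebra_simps)
    qed
    also have "norm \<dots> \<le> 1" using creal[OF r] cim[OF im] by (intro conv_le1) auto
    finally show ?thesis .
  qed
  have "z = 0"
    by (rule cauchy_zero[OF ee ez ze, of "\<delta> / 2"]) (use d0 cc in auto)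
  moreover have "z = adj (P j * P i) * (P j * P i)"
    using Pi Pj by (simp add: z_def adj_mult mult.assoc) (metis mult.assoc)
  ultimately show ?thesis using norm_zero_iff_sq by metis
qed



lemma unitary_adj_left: "unitary u \<Longrightarrow> adj u * u = 1" by (simp add: unitary_def)
lemma unitary_adj_right: "unitary u \<Longrightarrow> u * adj u = 1" by (simp add: unitary_def)

lemma upow_0[simp]: "upow u 0 = 1" by (simp add: upow_def)
lemma upow_nat: "upow u (int n) = u ^ n" by (simp add: upow_def)
lemma upow_1[simp]: "upow u 1 = u" by (simp add: upow_def)

lemma upow_plus1:
  assumes "unitary u" shows "upow u (g + 1) = upow u g * u"
proof (cases "0 \<le> g")
  case True
  then have "nat (g + 1) = Suc (nat g)" by simp
  moreover have "u ^ Suc (nat g) = u ^ nat g * u" by (rule power_Suc2)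
  ultimately show ?thesis using True by (simp only: upow_def) simp
next
  case False
  define m where "m = nat (- g) - 1"
  have m: "- g = int (Suc m)" using False by (simp add: m_def)
  show ?thesis
  proof (cases "g + 1 = 0")
    case True
    then have "g = -1" by simp
    then show ?thesis using assms by (simp add: upow_def unitary_def)
  next
    case F: False
    then have "nat (- (g + 1)) = m" using m by simp
    moreover have "nat (- g) = Suc m" using m by simp
    moreover have "adj u ^ Suc m * u = adj u ^ m"
      using assms by (simp only: power_Suc2 mult.assoc unitary_def) simp
    moreover have "\<not> 0 \<le> g + 1" using False F by simp
    ultimately show ?thesis using False
      by (simp only: upow_def if_False)
  qed
qed

lemma upow_minus1:
  assumes "unitary u" shows "upow u (g - 1) = upow u g * adj u"
proof -
  have "upow u g = upow u (g - 1) * u" using upow_plus1[OF assms, of "g - 1"] by simp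
  then have "upow u g * adj u = upow u (g - 1) * (u * adj u)" by (simp add: mult.assoc)
  then show ?thesis using assms by (simp add: unitary_def)
qed

lemma upow_add:
  assumes u: "unitary u" shows "upow u (g + k) = upow u g * upow u k"
proof (induction k rule: int_induct[where k = 0])
  case base
  then show ?case by simp
next
  case (step1 i)
  have "upow u (g + (i + 1)) = upow u ((g + i) + 1)" by (simp add: add.assoc)
  also have "\<dots> = upow u g * upow u i * u" using step1 upow_plus1[OF u] by simp
  also have "\<dots> = upow u g * upow u (i + 1)" using upow_plus1[OF u, of i] by (simp add: mult.assoc)
  finally show ?case .
next
  case (step2 i)
  have "upow u (g + (i - 1)) = upow u ((g + i) - 1)" by (simp add: algebra_simps)
  also have "\<dots> = upow u g * upow u i * adj u" using step2 upow_minus1[OF u] by simp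
  also have "\<dots> = upow u g * upow u (i - 1)" using upow_minus1[OF u, of i] by (simp add: mult.assoc)
  finally show ?case .
qed

lemma upow_adj: "adj (upow u g) = upow u (- g)"
proof (cases "0 \<le> g")
  case True
  then show ?thesis
    by (cases "g = 0") (auto simp: upow_def adj_power)
next
  case False
  then show ?thesis by (simp add: upow_def adj_power adj_adj)
qed

lemma upow_inv_left: "unitary u \<Longrightarrow> upow u (- g) * upow u g = 1"
  using upow_add[of u "-g" g] by simp

lemma upow_inv_right: "unitary u \<Longrightarrow> upow u g * upow u (- g) = 1"
  using upow_add[of u g "-g"] by simp

lemma upow_unitary: "unitary u \<Longrightarrow> unitary (upow u g)"
  by (simp add: unitary_def upow_adj upow_inv_left upow_inv_right)



locale Sset =
  fixes S :: "nat set"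
  assumes S2: "\<And>p. p \<in> S \<Longrightarrow> 2 \<le> p"
    and Scop: "\<And>p q. p \<in> S \<Longrightarrow> q \<in> S \<Longrightarrow> p \<noteq> q \<Longrightarrow> coprime p q"
begin

lemma Hplus_pos: "h \<in> Hplus S \<Longrightarrow> 0 < h"
  by (induction rule: Hplus.induct) (auto dest: S2)

lemma Hplus_S: "p \<in> S \<Longrightarrow> p \<in> Hplus S"
  using Hplus.mult[OF _ Hplus.one] by simp

lemma Hplus_mult: "h \<in> Hplus S \<Longrightarrow> k \<in> Hplus S \<Longrightarrow> h * k \<in> Hplus S"
  by (induction rule: Hplus.induct) (auto simp: mult.assoc intro: Hplus.mult)

lemma Hplus_div: "h \<in> Hplus S \<Longrightarrow> p \<in> S \<Longrightarrow> p dvd h \<Longrightarrow> h div p \<in> Hplus S"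
proof (induction rule: Hplus.induct)
  case one
  then show ?case using S2[of p] by auto
next
  case (mult q h)
  show ?case
  proof (cases "q = p")
    case True
    then show ?thesis using mult S2[of p] by simp
  next
    case False
    then have "coprime p q" using Scop mult by blast
    then have "p dvd h" using mult coprime_dvd_mult_right_iff by blast
    then have "h div p \<in> Hplus S" using mult by blast
    moreover have "q * h div p = q * (h div p)" using \<open>p dvd h\<close> by (simp add: div_mult_swap)
    ultimately show ?thesis using mult Hplus.mult by simp
  qed
qed

lemma Hplus_coprime: "h \<in> Hplus S \<Longrightarrow> p \<in> S \<Longrightarrow> \<not> p dvd h \<Longrightarrow> coprime p h"
proof (induction rule: Hplus.induct)
  case one
  then show ?case by simp
next
  case (mult q h)
  then have "q \<noteq> p" by auto
  then have "coprime p q" using Scop mult by blast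
  moreover have "\<not> p dvd h" using mult by (metis dvd_mult)
  ultimately show ?case using mult by simp
qed

end

function Vf :: "nat set \<Rightarrow> (nat \<Rightarrow> 'a::monoid_mult) \<Rightarrow> nat \<Rightarrow> 'a" where
  "Vf S s h = (if h \<le> 1 \<or> \<not> (\<exists>p\<in>S. 2 \<le> p \<and> p dvd h) then 1
     else s (LEAST p. p \<in> S \<and> 2 \<le> p \<and> p dvd h) * Vf S s (h div (LEAST p. p \<in> S \<and> 2 \<le> p \<and> p dvd h)))"
  by auto
termination
proof (relation "measure (\<lambda>(S, s, h). h)")
  fix S :: "nat set" and s :: "nat \<Rightarrow> 'a" and h :: nat
  assume a: "\<not> (h \<le> 1 \<or> \<not> (\<exists>p\<in>S. 2 \<le> p \<and> p dvd h))"
  then have "\<exists>p. p \<in> S \<and> 2 \<le> p \<and> p dvd h" by blast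
  then have "2 \<le> (LEAST p. p \<in> S \<and> 2 \<le> p \<and> p dvd h)" by (rule LeastI2_ex) auto
  then show "((S, s, h div (LEAST p. p \<in> S \<and> 2 \<le> p \<and> p dvd h)), S, s, h) \<in> measure (\<lambda>(S, s, h). h)"
    using a by simp
qed simp

declare Vf.simps[simp del]

lemma Vf_1[simp]: "Vf S s 1 = 1" by (simp add: Vf.simps)

context Sset begin

lemma Vf_step:
  fixes s :: "nat \<Rightarrow> 'a::monoid_mult"
  assumes comm: "\<And>p q. p \<in> S \<Longrightarrow> q \<in> S \<Longrightarrow> s p * s q = s q * s p"
  shows "h \<in> Hplus S \<Longrightarrow> p \<in> S \<Longrightarrow> p dvd h \<Longrightarrow> Vf S s h = s p * Vf S s (h div p)"
proof (induction h arbitrary: p rule: less_induct)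
  case (less h)
  have h0: "0 < h" using less Hplus_pos by blast
  have p2: "2 \<le> p" using S2 less by blast
  have ex: "\<exists>p. p \<in> S \<and> 2 \<le> p \<and> p dvd h" using less p2 by blast
  define q where "q = (LEAST p. p \<in> S \<and> 2 \<le> p \<and> p dvd h)"
  have q: "q \<in> S" "2 \<le> q" "q dvd h" using LeastI_ex[OF ex] unfolding q_def by auto
  have h2: "\<not> h \<le> 1" using q h0 by (metis dvd_imp_le le_trans not_le numeral_le_one_iff semiring_norm(69)) 
  have Vh: "Vf S s h = s q * Vf S s (h div q)"
  proof -
    have cnd: "\<not> (h \<le> 1 \<or> \<not> (\<exists>p\<in>S. 2 \<le> p \<and> p dvd h))" using h2 ex by blast
    show ?thesis by (subst Vf.simps, subst if_not_P[OF cnd]) (simp add: q_def)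
  qed
  show ?case
  proof (cases "q = p")
    case True
    then show ?thesis using Vh by simp
  next
    case False
    have cpq: "coprime p q" using Scop False less q by blast
    have hq: "h div q \<in> Hplus S" using Hplus_div less q by blast
    have hp: "h div p \<in> Hplus S" using Hplus_div less by blast
    have hql: "h div q < h" using q h0 by simp
    have hpl: "h div p < h" using p2 h0 by simp
    have pdq: "p dvd h div q"
    proof -
      have "h = q * (h div q)" using q by simp
      then have "p dvd q * (h div q)" using less by metis
      then show ?thesis using cpq coprime_dvd_mult_right_iff by blast
    qed
    have qdp: "q dvd h div p"
    proof -
      have "h = p * (h div p)" using less by simp
      then have "q dvd p * (h div p)" using q by metis
      moreover have "coprime q p" using cpq by (simp add: coprime_commute)
      ultimately show ?thesis using coprime_dvd_mult_right_iff by blast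
    qed
    have e1: "Vf S s (h div q) = s p * Vf S s (h div q div p)"
      using less.IH[OF hql hq less(3) pdq] .
    have e2: "Vf S s (h div p) = s q * Vf S s (h div p div q)"
      using less.IH[OF hpl hp q(1) qdp] .
    have "h div q div p = h div p div q" by (metis div_mult2_eq mult.commute)
    then show ?thesis using Vh e1 e2 comm[OF q(1) less(3)] by (simp add: mult.assoc[symmetric])
  qed
qed

lemma Vf_mult:
  fixes s :: "nat \<Rightarrow> 'a::monoid_mult"
  assumes comm: "\<And>p q. p \<in> S \<Longrightarrow> q \<in> S \<Longrightarrow> s p * s q = s q * s p"
    and "p \<in> S" "h \<in> Hplus S"
  shows "Vf S s (p * h) = s p * Vf S s h"
proof -
  have "p * h \<in> Hplus S" using assms Hplus.mult by blast
  then show ?thesis using Vf_step[OF comm, where h="p * h" and p=p] assms S2[of p] by simp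
qed

end


locale QSctx = Sset S for S +
  fixes u :: "'a::cstar_algebra" and s :: "nat \<Rightarrow> 'a"
  assumes QS: "QS_rel S u s"
begin

abbreviation U where "U \<equiv> upow u"

lemma uu: "unitary u" using QS by (simp add: QS_rel_def)
lemma iso: "p \<in> S \<Longrightarrow> adj (s p) * s p = 1" using QS by (simp add: QS_rel_def isometry_def)
lemma nica: "p \<in> S \<Longrightarrow> q \<in> S \<Longrightarrow> p \<noteq> q \<Longrightarrow> adj (s p) * s q = s q * adj (s p)"
  using QS by (simp add: QS_rel_def)
lemma su: "p \<in> S \<Longrightarrow> s p * u = u ^ p * s p" using QS by (simp add: QS_rel_def)
lemma ssum: "p \<in> S \<Longrightarrow> (\<Sum>m<p. U (int m) * s p * adj (s p) * U (- int m)) = 1"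
  using QS by (simp add: QS_rel_def)

lemma U_add: "U (g + k) = U g * U k" using upow_add[OF uu] .
lemma U_adj: "adj (U g) = U (- g)" by (rule upow_adj)
lemma U_inv1: "U (- g) * U g = 1" using upow_inv_left[OF uu] .
lemma U_inv2: "U g * U (- g) = 1" using upow_inv_right[OF uu] .

lemma comm: "p \<in> S \<Longrightarrow> q \<in> S \<Longrightarrow> s p * s q = s q * s p"
proof (cases "p = q")
  case False
  assume pq: "p \<in> S" "q \<in> S"
  define a where "a = s p * s q"
  define b where "b = s q * s p"
  have aa: "adj a * a = 1" using iso pq
    by (simp add: a_def adj_mult mult.assoc) (metis mult.assoc mult_1_left)
  have bb: "adj b * b = 1" using iso pq
    by (simp add: b_def adj_mult mult.assoc) (metis mult.assoc mult_1_left)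
  have ab: "adj a * b = 1"
  proof -
    have "adj a * b = adj (s q) * (adj (s p) * s q) * s p"
      by (simp add: a_def b_def adj_mult mult.assoc)
    also have "\<dots> = adj (s q) * s q * (adj (s p) * s p)"
      using nica[OF pq False] by (simp add: mult.assoc)
    also have "\<dots> = 1" using iso pq by simp
    finally show ?thesis .
  qed
  have ba: "adj b * a = 1" using ab by (metis adj_mult adj_adj adj_one)
  have "adj (a - b) * (a - b) = 0"
    by (simp add: adj_diff algebra_simps aa bb ab ba)
  then have "a - b = 0" by (rule norm_zero_iff_sq)
  then show ?thesis by (simp add: a_def b_def)
qed simp

lemma sU: assumes p: "p \<in> S" shows "s p * U g = U (int p * g) * s p"
proof (induction g rule: int_induct[where k = 0])
  case base then show ?case by simp
next
  case (step1 i)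
  have "s p * U (i + 1) = s p * U i * u" by (simp add: upow_plus1[OF uu] mult.assoc)
  also have "\<dots> = U (int p * i) * (s p * u)" using step1 by (simp add: mult.assoc)
  also have "\<dots> = U (int p * i) * U (int p) * s p" using su[OF p] by (simp add: upow_nat mult.assoc)
  also have "\<dots> = U (int p * (i + 1)) * s p" by (simp add: U_add distrib_left)
  finally show ?case .
next
  case (step2 i)
  have sa: "s p * adj u = U (- int p) * s p"
  proof -
    have "U (- int p) * s p * u = s p"
      using su[OF p] by (simp add: mult.assoc upow_nat[symmetric]) (simp add: mult.assoc[symmetric] U_inv1)
    then have "U (- int p) * s p * u * adj u = s p * adj u" by simp
    then show ?thesis using uu by (simp add: mult.assoc unitary_def)
  qed
  have "s p * U (i - 1) = s p * U i * adj u" by (simp add: upow_minus1[OF uu] mult.assoc)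
  also have "\<dots> = U (int p * i) * (s p * adj u)" using step2 by (simp add: mult.assoc)
  also have "\<dots> = U (int p * i) * U (- int p) * s p" using sa by (simp add: mult.assoc)
  also have "\<dots> = U (int p * (i - 1)) * s p"
    by (simp add: U_add[symmetric] right_diff_distrib)
  finally show ?case .
qed

lemma orth_small:
  assumes p: "p \<in> S" and r: "0 < r" "r < p"
  shows "adj (s p) * U (int r) * s p = 0"
proof -
  define P where "P j = U (int j) * s p * adj (s p) * U (- int j)" for j
  have proj: "adj (P j) = P j \<and> P j * P j = P j" for j
  proof
    show "adj (P j) = P j" by (simp add: P_def adj_mult U_adj adj_adj mult.assoc)
    have "P j * P j = U (int j) * s p * (adj (s p) * (U (- int j) * U (int j)) * s p) * adj (s p) * U (- int j)"
      by (simp add: P_def mult.assoc)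
    also have "\<dots> = P j" using iso[OF p] by (simp add: U_inv1 P_def)
    finally show "P j * P j = P j" .
  qed
  have "P 0 * P r = 0"
    by (rule proj_orth[of p P]) (use proj ssum[OF p] r in \<open>auto simp: P_def\<close>)
  then have "adj (s p) * (P 0 * P r) * U (int r) * s p = 0" by simp
  moreover have "adj (s p) * (P 0 * P r) * U (int r) * s p
      = (adj (s p) * s p) * (adj (s p) * U (int r) * s p) * (adj (s p) * (U (- int r) * U (int r)) * s p)"
    by (simp add: P_def mult.assoc)
  ultimately show ?thesis using iso[OF p] by (simp add: U_inv1)
qed

lemma orth:
  assumes p: "p \<in> S" and g: "\<not> int p dvd g"
  shows "adj (s p) * U g * s p = 0"
proof -
  define r where "r = g mod int p"
  define q where "q = g div int p"
  have p0: "int p > 0" using S2[OF p] by simp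
  have r0: "0 < r" using g p0 unfolding r_def
    by (metis dvd_eq_mod_eq_0 le_less pos_mod_sign)
  have rp: "r < int p" using p0 by (simp add: r_def)
  have gq: "g = r + int p * q" by (simp add: r_def q_def)
  have "adj (s p) * U g * s p = adj (s p) * U r * (U (int p * q) * s p)"
    by (simp add: gq U_add mult.assoc)
  also have "\<dots> = adj (s p) * U (int (nat r)) * s p * U q"
    using sU[OF p, of q] r0 by (simp add: mult.assoc)
  also have "adj (s p) * U (int (nat r)) * s p = 0"
    using orth_small[OF p, of "nat r"] r0 rp by simp
  finally show ?thesis by simp
qed

end


context QSctx begin

abbreviation V where "V \<equiv> Vf S s"

lemma Vf_Suc0[simp]: "Vf S' s' (Suc 0) = 1" using Vf_1 by simp
lemma Hplus_Suc0[simp]: "Suc 0 \<in> Hplus S" using Hplus.one by simp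

lemma V_mult_S: assumes "p \<in> S" "h \<in> Hplus S" shows "V (p * h) = s p * V h"
  by (rule Vf_mult) (use comm assms in auto)

lemma V_S: "p \<in> S \<Longrightarrow> V p = s p" using V_mult_S[of p 1] by simp

lemma V_iso: "h \<in> Hplus S \<Longrightarrow> adj (V h) * V h = 1"
proof (induction rule: Hplus.induct)
  case one then show ?case by simp
next
  case (mult p h)
  have "adj (V (p * h)) * V (p * h) = adj (V h) * (adj (s p) * s p) * V h"
    using mult by (simp add: V_mult_S adj_mult mult.assoc)
  then show ?case using mult iso by simp
qed

lemma V_hom: "h \<in> Hplus S \<Longrightarrow> k \<in> Hplus S \<Longrightarrow> V (h * k) = V h * V k"
proof (induction rule: Hplus.induct)
  case one then show ?case by simp
next
  case (mult p h)
  have "h * k \<in> Hplus S" using mult Hplus_mult by blast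
  then show ?case using mult by (simp add: V_mult_S mult.assoc)
qed

lemma V_U: "h \<in> Hplus S \<Longrightarrow> V h * U g = U (int h * g) * V h"
proof (induction arbitrary: g rule: Hplus.induct)
  case one then show ?case by simp
next
  case (mult p h)
  have "V (p * h) * U g = s p * (V h * U g)" using mult by (simp add: V_mult_S mult.assoc)
  also have "\<dots> = s p * U (int h * g) * V h" using mult by (simp add: mult.assoc)
  also have "\<dots> = U (int p * (int h * g)) * s p * V h" using sU[OF mult(1)] by simp
  also have "\<dots> = U (int (p * h) * g) * V (p * h)" using mult by (simp add: V_mult_S mult.assoc)
  finally show ?case .
qed

lemma adjV_U: "h \<in> Hplus S \<Longrightarrow> adj (V h) * U (int h * g) = U g * adj (V h)"
proof -
  assume h: "h \<in> Hplus S"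
  have "V h * U (- g) = U (- (int h * g)) * V h" using V_U[OF h, of "-g"] by simp
  then have "adj (V h * U (- g)) = adj (U (- (int h * g)) * V h)" by simp
  then show ?thesis by (simp add: adj_mult U_adj)
qed

lemma adjs_V: "k \<in> Hplus S \<Longrightarrow> p \<in> S \<Longrightarrow> \<not> p dvd k \<Longrightarrow> adj (s p) * V k = V k * adj (s p)"
proof (induction rule: Hplus.induct)
  case one then show ?case by simp
next
  case (mult q k)
  then have "q \<noteq> p" by auto
  moreover have "\<not> p dvd k" using mult by (metis dvd_mult)
  ultimately show ?case using mult nica[of p q]
    by (simp add: V_mult_S mult.assoc[symmetric]) (simp add: mult.assoc)
qed

lemma lemmaN:
  "h \<in> Hplus S \<Longrightarrow> k \<in> Hplus S \<Longrightarrow>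
     h div gcd h k \<in> Hplus S \<and> k div gcd h k \<in> Hplus S \<and>
     adj (V h) * V k = V (k div gcd h k) * adj (V (h div gcd h k))"
proof (induction arbitrary: k rule: Hplus.induct)
  case one then show ?case by simp
next
  case (mult p h)
  have p0: "p > 0" using S2[OF mult(1)] by simp
  show ?case
  proof (cases "p dvd k")
    case True
    define k' where "k' = k div p"
    have kk: "k = p * k'" using True by (simp add: k'_def)
    have k'H: "k' \<in> Hplus S" using Hplus_div mult True by (simp add: k'_def)
    have g: "gcd (p * h) k = p * gcd h k'" by (simp add: kk gcd_mult_distrib_nat)
    have d1: "p * h div gcd (p * h) k = h div gcd h k'" using p0 by (simp add: g)
    have d2: "k div gcd (p * h) k = k' div gcd h k'" using p0 by (subst g) (simp add: kk)
    have "adj (V (p * h)) * V k = adj (V h) * (adj (s p) * s p) * V k'"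
      using mult k'H by (simp add: kk V_mult_S adj_mult mult.assoc)
    also have "\<dots> = adj (V h) * V k'" using iso[OF mult(1)] by simp
    finally show ?thesis using mult.IH[OF k'H] d1 d2 by simp
  next
    case False
    have cop: "coprime p k" using Hplus_coprime mult False by blast
    have g: "gcd (p * h) k = gcd h k"
      using cop by (simp add: gcd_mult_left_left_cancel coprime_commute)
    have dh: "gcd h k dvd h" by simp
    have d1: "p * h div gcd (p * h) k = p * (h div gcd h k)" by (simp add: g div_mult_swap[OF dh])
    have IH: "h div gcd h k \<in> Hplus S" "k div gcd h k \<in> Hplus S"
        "adj (V h) * V k = V (k div gcd h k) * adj (V (h div gcd h k))"
      using mult.IH[OF mult(4)] by auto
    have "adj (V (p * h)) * V k = adj (V h) * (adj (s p) * V k)"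
      using mult by (simp add: V_mult_S adj_mult mult.assoc)
    also have "\<dots> = adj (V h) * V k * adj (s p)"
      using adjs_V[OF mult(4) mult(1) False] by (simp add: mult.assoc)
    also have "\<dots> = V (k div gcd h k) * adj (s p * V (h div gcd h k))"
      using IH by (simp add: adj_mult mult.assoc)
    also have "\<dots> = V (k div gcd (p * h) k) * adj (V (p * h div gcd (p * h) k))"
    proof -
      have "p * h div gcd h k = p * (h div gcd h k)" by (simp add: div_mult_swap[OF dh])
      then show ?thesis using V_mult_S[OF mult(1) IH(1)] by (simp add: g)
    qed
    finally show ?thesis using IH d1 g mult Hplus.mult by simp
  qed
qed

lemma lemmaZ:
  "h \<in> Hplus S \<Longrightarrow> k \<in> Hplus S \<Longrightarrow> \<not> int (gcd h k) dvd g \<Longrightarrow> adj (V h) * U g * V k = 0"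
proof (induction arbitrary: k g rule: Hplus.induct)
  case one then show ?case by simp
next
  case (mult p h)
  have p0: "p > 0" using S2[OF mult(1)] by simp
  show ?case
  proof (cases "p dvd k")
    case True
    define k' where "k' = k div p"
    have kk: "k = p * k'" using True by (simp add: k'_def)
    have k'H: "k' \<in> Hplus S" using Hplus_div mult True by (simp add: k'_def)
    have g: "gcd (p * h) k = p * gcd h k'" by (simp add: kk gcd_mult_distrib_nat)
    have e: "adj (V (p * h)) * U g * V k = adj (V h) * (adj (s p) * U g * s p) * V k'"
      using mult k'H by (simp add: kk V_mult_S adj_mult mult.assoc)
    show ?thesis
    proof (cases "int p dvd g")
      case False
      then show ?thesis using e orth[OF mult(1)] by simp
    next
      case True
      then obtain g' where g': "g = int p * g'" by blast
      have "adj (s p) * U g * s p = adj (s p) * (U (int p * g') * s p)" by (simp add: g' mult.assoc)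
      also have "\<dots> = adj (s p) * (s p * U g')" using sU[OF mult(1), of g'] by simp
      also have "\<dots> = U g'" using iso[OF mult(1)] by (simp add: mult.assoc[symmetric])
      finally have "adj (s p) * U g * s p = U g'" .
      moreover have "\<not> int (gcd h k') dvd g'"
      proof
        assume "int (gcd h k') dvd g'"
        then have "int p * int (gcd h k') dvd int p * g'" by simp
        then show False using mult(5) g g' by simp
      qed
      ultimately show ?thesis using e mult.IH[OF k'H] by (simp add: mult.assoc)
    qed
  next
    case False
    have cop: "coprime p k" using Hplus_coprime mult False by blast
    have g: "gcd (p * h) k = gcd h k"
      using cop by (simp add: gcd_mult_left_left_cancel coprime_commute)
    obtain a b where ab: "int (gcd p k) = a * int p + b * int k" using bezw_aux by blast
    then have ab1: "1 = a * int p + b * int k" using cop by simp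
    define g1 where "g1 = g * a"
    define g2 where "g2 = g * b"
    have gg: "g = int p * g1 + int k * g2"
      using ab1 by (simp add: g1_def g2_def algebra_simps) (metis mult.right_neutral distrib_left mult.commute mult.left_commute)
    have ng1: "\<not> int (gcd h k) dvd g1"
    proof
      assume "int (gcd h k) dvd g1"
      moreover have "int (gcd h k) dvd int k * g2" by simp
      ultimately have "int (gcd h k) dvd g" unfolding gg by (simp add: dvd_add)
      then show False using mult(5) g by simp
    qed
    have "adj (V (p * h)) * U g * V k = adj (V h) * (adj (s p) * U (int p * g1)) * (U (int k * g2) * V k)"
      using mult by (simp add: V_mult_S adj_mult mult.assoc gg U_add)
    also have "adj (s p) * U (int p * g1) = U g1 * adj (s p)"
      using adjV_U[OF Hplus_S[OF mult(1)], of g1] V_S[OF mult(1)] by simp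
    also have "U (int k * g2) * V k = V k * U g2"
      using V_U[OF mult(4), of g2] by simp
    also have "adj (V h) * (U g1 * adj (s p)) * (V k * U g2) = (adj (V h) * U g1 * V k) * adj (s p) * U g2"
    proof -
      have c: "adj (s p) * (V k * X) = V k * (adj (s p) * X)" for X
        using adjs_V[OF mult(4) mult(1) False] by (metis mult.assoc)
      show ?thesis by (simp add: mult.assoc c)
    qed
    also have "adj (V h) * U g1 * V k = 0" using mult.IH[OF mult(4) ng1] .
    finally show ?thesis by simp
  qed
qed

end


lemma sum_int_range: "(\<Sum>g\<in>{0..<int n}. f g) = (\<Sum>i<n. f (int i))"
proof -
  have "{0..<int n} = int ` {..<n}" using image_int_atLeastLessThan[of 0 n] by (simp add: lessThan_atLeast0)
  then show ?thesis by (simp add: sum.reindex)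
qed

lemma sum_lessThan_add: "(\<Sum>i<(m::nat) + (p::nat). F i) = (\<Sum>i<m. F i) + (\<Sum>a<p. F (a + m))"
  by (induction p) (auto simp: add_ac)

lemma sum_split_mult: "(\<Sum>i<(p::nat) * (n::nat). F i) = (\<Sum>b<n. \<Sum>a<p. F (a + p * b))"
proof (induction n)
  case 0 then show ?case by simp
next
  case (Suc n)
  have "(\<Sum>i<p * Suc n. F i) = (\<Sum>i<p * n + p. F i)" by (simp add: add.commute)
  also have "\<dots> = (\<Sum>i<p * n. F i) + (\<Sum>a<p. F (a + p * n))" by (rule sum_lessThan_add)
  finally show ?case using Suc by simp
qed

context QSctx begin

lemma V_CNP3: "h \<in> Hplus S \<Longrightarrow> (\<Sum>g\<in>{0..<int h}. U g * V h * adj (V h) * adj (U g)) = 1"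
proof (induction rule: Hplus.induct)
  case one
  have "{0..<int 1} = {0::int}" by auto
  then show ?case by simp
next
  case (mult p h)
  define G where "G b = U b * V h * adj (V h) * adj (U b)" for b
  define F where "F g = U g * V (p * h) * adj (V (p * h)) * adj (U g)" for g
  have IH: "(\<Sum>b<h. G (int b)) = 1" using mult.IH by (simp add: sum_int_range G_def)
  have Fab: "F (int (a + p * b)) = U (int a) * s p * G (int b) * adj (s p) * adj (U (int a))" for a b
  proof -
    have Ue: "U (int (a + p * b)) = U (int a) * U (int p * int b)" by (simp add: U_add)
    have sp: "U (int p * int b) * s p = s p * U (int b)" using sU[OF mult(1)] by simp
    have sp': "adj (s p) * adj (U (int p * int b)) = adj (U (int b)) * adj (s p)"
      using arg_cong[OF sp, of adj] by (simp add: adj_mult)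
    have "F (int (a + p * b)) = U (int a) * (U (int p * int b) * s p) * V h * adj (V h)
        * (adj (s p) * adj (U (int p * int b))) * adj (U (int a))"
      unfolding F_def Ue using mult by (simp add: V_mult_S adj_mult mult.assoc)
    also have "\<dots> = U (int a) * s p * G (int b) * adj (s p) * adj (U (int a))"
      unfolding sp sp' G_def by (simp add: mult.assoc)
    finally show ?thesis .
  qed
  have "(\<Sum>g\<in>{0..<int (p * h)}. F g) = (\<Sum>i<p * h. F (int i))" by (rule sum_int_range)
  also have "\<dots> = (\<Sum>b<h. \<Sum>a<p. F (int (a + p * b)))" by (rule sum_split_mult)
  also have "\<dots> = (\<Sum>a<p. \<Sum>b<h. U (int a) * s p * G (int b) * adj (s p) * adj (U (int a)))"
    unfolding Fab by (rule sum.swap)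
  also have "\<dots> = (\<Sum>a<p. U (int a) * s p * (\<Sum>b<h. G (int b)) * adj (s p) * adj (U (int a)))"
    by (simp add: sum_distrib_left sum_distrib_right)
  also have "\<dots> = (\<Sum>a<p. U (int a) * s p * adj (s p) * U (- int a))"
    using IH by (simp add: U_adj)
  also have "\<dots> = 1" using ssum[OF mult(1)] .
  finally show ?case by (simp add: F_def)
qed

lemma CNP_holds: "CNP_rel S U V"
  unfolding CNP_rel_def
proof (intro conjI allI ballI impI)
  show "U 0 = 1" by simp
  show "U (g + k) = U g * U k" for g k by (rule U_add)
  show "unitary (U g)" for g by (rule upow_unitary[OF uu])
  show "V 1 = 1" by simp
  show "isometry (V h)" if "h \<in> Hplus S" for h using V_iso[OF that] by (simp add: isometry_def)
  show "V (h * k) = V h * V k" if "h \<in> Hplus S" "k \<in> Hplus S" for h k using V_hom that by blast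
  show "V h * U g = U (int h * g) * V h" if "h \<in> Hplus S" for h g using V_U[OF that] .
  show "(\<Sum>g\<in>{0..<int h}. U g * V h * adj (V h) * adj (U g)) = 1" if "h \<in> Hplus S" for h
    using V_CNP3[OF that] .
  fix h k g g1 g2
  assume h: "h \<in> Hplus S" and k: "k \<in> Hplus S"
  {
    assume gg: "g = int h * g1 + int k * g2"
    have "adj (V h) * U g * V k = (adj (V h) * U (int h * g1)) * (U (int k * g2) * V k)"
      by (simp add: gg U_add mult.assoc)
    also have "\<dots> = U g1 * (adj (V h) * V k) * U g2"
      using adjV_U[OF h, of g1] V_U[OF k, of g2] by (simp add: mult.assoc)
    also have "\<dots> = U g1 * V (k div gcd h k) * adj (V (h div gcd h k)) * U g2"
      using lemmaN[OF h k] by (simp add: mult.assoc)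
    finally show "adj (V h) * U g * V k = U g1 * V (k div gcd h k) * adj (V (h div gcd h k)) * U g2" .
  }
  {
    assume nr: "\<nexists>g1 g2. g = int h * g1 + int k * g2"
    have "\<not> int (gcd h k) dvd g"
    proof
      assume "int (gcd h k) dvd g"
      then obtain t where t: "g = int (gcd h k) * t" by blast
      obtain a b where ab: "int (gcd h k) = a * int h + b * int k" using bezw_aux by blast
      have "g = int h * (a * t) + int k * (b * t)" using t ab by (simp add: algebra_simps)
      then show False using nr by blast
    qed
    then show "adj (V h) * U g * V k = 0" using lemmaZ[OF h k] by blast
  }
qed

end

lemma upow_from_hom:
  fixes U :: "int \<Rightarrow> 'a::cstar_algebra"
  assumes U0: "U 0 = 1" and Ua: "\<And>g k. U (g + k) = U g * U k" and Uu: "\<And>g. unitary (U g)"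
  shows "upow (U 1) g = U g"
proof -
  have adjU: "adj (U g) = U (- g)" for g
  proof -
    have "U g * U (- g) = 1" using Ua[of g "-g"] U0 by simp
    then have "adj (U g) * (U g * U (- g)) = adj (U g)" by simp
    then show ?thesis using Uu[of g] by (simp add: unitary_def mult.assoc[symmetric])
  qed
  have pos: "U 1 ^ n = U (int n)" for n
    by (induction n) (auto simp: U0 Ua[symmetric] add.commute)
  have neg: "U (-1) ^ n = U (- int n)" for n
    by (induction n) (auto simp: U0 Ua[symmetric] add.commute)
  show ?thesis
  proof (cases "0 \<le> g")
    case True then show ?thesis by (simp add: upow_def pos)
  next
    case False then show ?thesis by (simp add: upow_def adjU neg)
  qed
qed

lemma CNP_imp_QS:
  fixes U :: "int \<Rightarrow> 'a::cstar_algebra"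
  assumes cnp: "CNP_rel S U V" and cop: "\<forall>p\<in>S. \<forall>q\<in>S. p \<noteq> q \<longrightarrow> coprime p q"
  shows "QS_rel S (U 1) V"
proof -
  have U0: "U 0 = 1" and Ua: "\<And>g k. U (g + k) = U g * U k" and Uu: "\<And>g. unitary (U g)"
    using cnp by (auto simp: CNP_rel_def)
  have up: "upow (U 1) g = U g" for g using upow_from_hom[OF U0 Ua Uu] .
  have pH: "p \<in> S \<Longrightarrow> p \<in> Hplus S" for p using Hplus.mult[OF _ Hplus.one, of p S] by simp
  have adjU: "adj (U g) = U (- g)" for g using up[of g] up[of "-g"] upow_adj[of "U 1" g] by simp
  show ?thesis
    unfolding QS_rel_def
  proof (intro conjI ballI impI)
    show "unitary (U 1)" using Uu .
    show "isometry (V p)" if "p \<in> S" for p using cnp pH[OF that] by (simp add: CNP_rel_def)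
    show "adj (V p) * V q = V q * adj (V p)" if "p \<in> S" "q \<in> S" "p \<noteq> q" for p q
    proof -
      have "gcd p q = 1" using cop that by (simp add: coprime_iff_gcd_eq_1)
      moreover have c2: "\<And>h k g g1 g2. h \<in> Hplus S \<Longrightarrow> k \<in> Hplus S \<Longrightarrow> g = int h * g1 + int k * g2 \<Longrightarrow>
          adj (V h) * U g * V k = U g1 * V (k div gcd h k) * adj (V (h div gcd h k)) * U g2"
        using cnp unfolding CNP_rel_def by blast
      have "adj (V p) * U 0 * V q = U 0 * V (q div gcd p q) * adj (V (p div gcd p q)) * U 0"
        using c2[OF pH[OF that(1)] pH[OF that(2)], of 0 0 0] by simp
      ultimately show ?thesis using U0 by simp
    qed
    show "V p * U 1 = U 1 ^ p * V p" if "p \<in> S" for p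
    proof -
      have "V p * U 1 = U (int p * 1) * V p" using cnp pH[OF that] by (simp add: CNP_rel_def)
      then show ?thesis using up[of "int p"] by (simp add: upow_nat)
    qed
    show "(\<Sum>m<p. upow (U 1) (int m) * V p * adj (V p) * upow (U 1) (- int m)) = 1" if "p \<in> S" for p
    proof -
      have "(\<Sum>g\<in>{0..<int p}. U g * V p * adj (V p) * adj (U g)) = 1"
        using cnp pH[OF that] by (simp add: CNP_rel_def)
      then show ?thesis by (simp add: sum_int_range up adjU)
    qed
  qed
qed

theorem proposition2p10:
  fixes S :: "nat set"
  assumes "S \<noteq> {}"
    and "\<forall>p\<in>S. 2 \<le> p"
    and "\<forall>p\<in>S. \<forall>q\<in>S. p \<noteq> q \<longrightarrow> coprime p q"
  shows "(\<forall>(U :: int \<Rightarrow> 'a::cstar_algebra) V. CNP_rel S U V \<longrightarrow> QS_rel S (U 1) V) \<and>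
         (\<forall>(u :: 'a) s. QS_rel S u s \<longrightarrow>
            (\<exists>U V. CNP_rel S U V \<and> U 1 = u \<and> (\<forall>p\<in>S. V p = s p)))"
proof (intro conjI allI impI)
  fix U :: "int \<Rightarrow> 'a" and V
  assume "CNP_rel S U V"
  then show "QS_rel S (U 1) V" using CNP_imp_QS assms(3) by blast
next
  fix u :: 'a and s
  assume qs: "QS_rel S u s"
  interpret QSctx S u s
    by unfold_locales (use assms qs in auto)
  show "\<exists>U V. CNP_rel S U V \<and> U 1 = u \<and> (\<forall>p\<in>S. V p = s p)"
    by (rule exI[of _ "upow u"], rule exI[of _ "Vf S s"]) (use CNP_holds V_S in auto)
qed


end
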